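(* Let $f:\mathbb{R}^n\to\mathbb{R}$ be convex and differentiable with $\nabla f$ $L$-Lipschitz continuous. Let $w^t\in\Delta^n$ and let $$w^{t+1}=w^t-\eta_t\,w^t\odot\Pi^t\nabla f^t$$ with $0<\eta_t\le\min\{1/L,\eta_{t,\max}\}$. Then $$f(w^{t+1})\le f(w^t)-\frac{\eta_t}{2}\operatorname{Var}[\nabla f^t\,|\,w^t].$$
   Context: $\Delta^n=\{w\in\mathbb{R}^n : \sum_i w_i=1,\ w_i\ge 0\}$. Write $\nabla f^t=\nabla f(w^t)$ and $(\Pi^t\nabla f^t)_i=\nabla_i f(w^t)-w^t\cdot\nabla f(w^t)$; $\odot$ is componentwise multiplication. $\eta_{t,\max}=1/\max_i(\nabla_i f(w^t)-w^t\cdot\nabla f(w^t))$, and $\operatorname{Var}[\nabla f^t\,|\,w^t]=\sum_i w^t_i\big(\nabla_i f(w^t)-w^t\cdot\nabla f(w^t)\big)^2$. *)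

theory Defs
  imports "HOL-Analysis.Analysis"
begin

definition prob_simplex :: "(real ^ 'n) set" where
  "prob_simplex = {w. (\<Sum>i\<in>UNIV. w $ i) = 1 \<and> (\<forall>i. 0 \<le> w $ i)}"

definition proj_grad :: "real ^ 'n \<Rightarrow> real ^ 'n \<Rightarrow> real ^ 'n" where
  "proj_grad w g = (\<chi> i. g $ i - w \<bullet> g)"

definition var_w :: "real ^ 'n \<Rightarrow> real ^ 'n \<Rightarrow> real" where
  "var_w w g = (\<Sum>i\<in>UNIV. w $ i * (g $ i - w \<bullet> g)^2)"

definition hadamard :: "real ^ 'n \<Rightarrow> real ^ 'n \<Rightarrow> real ^ 'n" where
  "hadamard a b = (\<chi> i. a $ i * b $ i)"

text \<open>Step-size constraint \<eta> \<le> \<eta>_max = 1 / max_i (\<Pi> g)_i, with the convention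
  1/0 = +\<infinity> (the maximum is always \<ge> 0 on the prob_simplex).\<close>
definition below_eta_max :: "real \<Rightarrow> real ^ 'n \<Rightarrow> real ^ 'n \<Rightarrow> bool" where
  "below_eta_max \<eta> w g = (\<eta> * (MAX i\<in>UNIV. proj_grad w g $ i) \<le> 1)"

end

theory Submission
  imports Defs
begin

lemma descent:
  fixes f :: "real ^ 'n \<Rightarrow> real" and grad :: "real ^ 'n \<Rightarrow> real ^ 'n"
  assumes grad: "\<And>x. (f has_derivative (\<lambda>h. grad x \<bullet> h)) (at x)"
    and lip: "L-lipschitz_on UNIV grad"
  shows "f (x + d) \<le> f x + grad x \<bullet> d + L / 2 * (d \<bullet> d)"
proof -
  define h where "h t = f (x + t *\<^sub>R d) - t * (grad x \<bullet> d) - L / 2 * t^2 * (d \<bullet> d)" for t :: real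
  define h' where "h' t = grad (x + t *\<^sub>R d) \<bullet> d - grad x \<bullet> d - L * t * (d \<bullet> d)" for t :: real
  have D: "(h has_real_derivative h' t) (at t)" for t
  proof -
    have "((\<lambda>t. x + t *\<^sub>R d) has_derivative (\<lambda>s. s *\<^sub>R d)) (at t)"
      by (auto intro!: derivative_eq_intros)
    from has_derivative_compose[OF this grad]
    have "((\<lambda>t. f (x + t *\<^sub>R d)) has_derivative (\<lambda>s. grad (x + t *\<^sub>R d) \<bullet> (s *\<^sub>R d))) (at t)"
      by (simp add: o_def)
    moreover have "(\<lambda>s. s * (grad (x + t *\<^sub>R d) \<bullet> d)) = (*) (grad (x + t *\<^sub>R d) \<bullet> d)"
      by (rule ext) (simp add: mult.commute)
    ultimately have "((\<lambda>t. f (x + t *\<^sub>R d)) has_real_derivative grad (x + t *\<^sub>R d) \<bullet> d) (at t)"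
      by (simp add: has_field_derivative_def)
    then show ?thesis unfolding h_def h'_def
      by (auto intro!: derivative_eq_intros simp: power2_eq_square algebra_simps)
  qed
  obtain z where z: "0 < z" "z < 1" "h 1 - h 0 = (1 - 0) * h' z"
    using MVT2[of 0 1 h h'] D by auto
  have "(grad (x + z *\<^sub>R d) - grad x) \<bullet> d \<le> norm (grad (x + z *\<^sub>R d) - grad x) * norm d"
    by (rule norm_cauchy_schwarz)
  also have "norm (grad (x + z *\<^sub>R d) - grad x) \<le> L * norm (z *\<^sub>R d)"
    using lip unfolding lipschitz_on_def by (metis UNIV_I add_diff_cancel_left' dist_norm)
  hence "norm (grad (x + z *\<^sub>R d) - grad x) * norm d \<le> L * norm (z *\<^sub>R d) * norm d"
    by (simp add: mult_right_mono)
  also have "L * norm (z *\<^sub>R d) * norm d = L * z * (d \<bullet> d)"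
    using z by (simp add: power2_norm_eq_inner[symmetric] power2_eq_square)
  finally have "h' z \<le> 0" unfolding h'_def by (simp add: inner_diff_left)
  with z have "h 1 \<le> h 0" by simp
  thus ?thesis unfolding h_def by simp
qed

theorem theoremA2:
  fixes f :: "real ^ 'n \<Rightarrow> real"
    and grad :: "real ^ 'n \<Rightarrow> real ^ 'n"
    and L \<eta> :: real
    and w :: "real ^ 'n"
  assumes cvx: "convex_on UNIV f"
    and grad: "\<And>x. (f has_derivative (\<lambda>h. grad x \<bullet> h)) (at x)"
    and lip: "L > 0" "L-lipschitz_on UNIV grad"
    and w: "w \<in> prob_simplex"
    and eta_pos: "0 < \<eta>"
    and eta_L: "\<eta> \<le> 1 / L"
    and eta_max: "below_eta_max \<eta> w (grad w)"
  shows "f (w - \<eta> *\<^sub>R hadamard w (proj_grad w (grad w)))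
           \<le> f w - \<eta> / 2 * var_w w (grad w)"
proof -
  define g where "g = grad w"
  define m where "m = w \<bullet> g"
  define V where "V = var_w w g"
  define d where "d = - (\<eta> *\<^sub>R hadamard w (proj_grad w g))"
  have w1: "(\<Sum>i\<in>UNIV. w $ i) = 1" and w0: "\<And>i. 0 \<le> w $ i"
    using w by (auto simp: prob_simplex_def)
  have wle: "w $ i \<le> 1" for i
  proof -
    have "w $ i \<le> (\<Sum>j\<in>UNIV. w $ j)"
      by (rule member_le_sum) (auto simp: w0)
    thus ?thesis using w1 by simp
  qed
  have m_def': "m = (\<Sum>i\<in>UNIV. w $ i * g $ i)" by (simp add: m_def inner_vec_def)
  have "(\<Sum>i\<in>UNIV. w $ i * g $ i * (g $ i - m)) = (\<Sum>i\<in>UNIV. w $ i * (g $ i - m)^2)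
        + m * (\<Sum>i\<in>UNIV. w $ i * (g $ i - m))"
    by (simp add: sum_distrib_left sum.distrib[symmetric] power2_eq_square algebra_simps)
  also have "(\<Sum>i\<in>UNIV. w $ i * (g $ i - m)) = 0"
    by (simp add: right_diff_distrib sum_subtractf sum_distrib_right[symmetric] w1 m_def'[symmetric])
  finally have gd0: "(\<Sum>i\<in>UNIV. w $ i * g $ i * (g $ i - m)) = V"
    by (simp add: V_def var_w_def m_def)
  have dcomp: "d $ i = - \<eta> * (w $ i * (g $ i - m))" for i
    by (simp add: d_def hadamard_def proj_grad_def m_def)
  have gd: "g \<bullet> d = - \<eta> * V"
  proof -
    have "g \<bullet> d = (\<Sum>i\<in>UNIV. - \<eta> * (w $ i * g $ i * (g $ i - m)))"
      unfolding inner_vec_def dcomp by (intro sum.cong) (auto simp: algebra_simps)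
    also have "\<dots> = - \<eta> * (\<Sum>i\<in>UNIV. w $ i * g $ i * (g $ i - m))"
      by (simp only: sum_distrib_left)
    finally show ?thesis using gd0 by simp
  qed
  have "d \<bullet> d = \<eta>^2 * (\<Sum>i\<in>UNIV. (w $ i)^2 * (g $ i - m)^2)"
  proof -
    have "d \<bullet> d = (\<Sum>i\<in>UNIV. \<eta>^2 * ((w $ i)^2 * (g $ i - m)^2))"
      unfolding inner_vec_def dcomp by (intro sum.cong) (auto simp: power2_eq_square algebra_simps)
    thus ?thesis by (simp only: sum_distrib_left)
  qed
  also have "\<dots> \<le> \<eta>^2 * V"
    unfolding V_def var_w_def m_def[symmetric]
  proof (intro mult_left_mono sum_mono)
    fix i
    show "(w $ i)^2 * (g $ i - m)^2 \<le> w $ i * (g $ i - m)^2"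
      using w0[of i] wle[of i] by (intro mult_right_mono) (auto simp: power2_eq_square mult_left_le)
  qed simp
  finally have dd: "d \<bullet> d \<le> \<eta>^2 * V" .
  have V0: "0 \<le> V" unfolding V_def var_w_def by (intro sum_nonneg) (simp add: w0)
  have "f (w + d) \<le> f w + g \<bullet> d + L / 2 * (d \<bullet> d)"
    using descent[OF grad lip(2)] g_def by blast
  also have "\<dots> \<le> f w - \<eta> * V + L / 2 * (\<eta>^2 * V)"
    using dd lip(1) gd by (simp add: mult_left_mono)
  also have "L * \<eta> \<le> 1" using eta_L lip(1) by (simp add: field_simps)
  hence "L / 2 * (\<eta>^2 * V) \<le> \<eta> / 2 * V"
    using V0 eta_pos
  proof -
    have "0 \<le> \<eta> * V" using V0 eta_pos by simp
    hence "(L * \<eta>) * (\<eta> * V) \<le> 1 * (\<eta> * V)"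
      using \<open>L * \<eta> \<le> 1\<close> by (intro mult_right_mono) auto
    thus ?thesis by (simp add: power2_eq_square field_simps)
  qed
  hence "f w - \<eta> * V + L / 2 * (\<eta>^2 * V) \<le> f w - \<eta> / 2 * V" by simp
  finally show ?thesis by (simp add: d_def g_def V_def)
qed

end
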